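(* Let $G$ be a finite, simple, undirected, connected graph with $n$ vertices. Then $\gamma_3(G)+\kappa(G)=2n-2$ if and only if $G$ is isomorphic to $K_4$, $C_4$ or $K_{1,2}$.
   Context: In a graph $G=(V,E)$, a vertex dominates itself and its neighbours. A set $S\subseteq V$ is a three dominating set of $G$ if every vertex in $V\setminus S$ is dominated by at least three vertices of $S$ (equivalently, every vertex of $V\setminus S$ has at least three neighbours in $S$). The three domination number $\gamma_3(G)$ is the minimum cardinality of a three dominating set of $G$. The connectivity $\kappa(G)$ of a connected graph $G$ is the minimum number of vertices whose removal results in a disconnected or trivial (one-vertex) graph; in particular $\kappa(K_n)=n-1$. $C_n$ denotes the cycle on $n$ vertices and $K_{m,n}$ the complete bipartite graph with parts of sizes $m$ and $n$. *)

theory Defs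
  imports Main
begin

definition sgraph :: "'a set \<Rightarrow> ('a \<Rightarrow> 'a \<Rightarrow> bool) \<Rightarrow> bool" where
  "sgraph V E \<longleftrightarrow> finite V \<and> (\<forall>u v. E u v \<longrightarrow> u \<in> V \<and> v \<in> V)
     \<and> (\<forall>u v. E u v \<longrightarrow> E v u) \<and> (\<forall>v. \<not> E v v)"

definition gconnected :: "'a set \<Rightarrow> ('a \<Rightarrow> 'a \<Rightarrow> bool) \<Rightarrow> bool" where
  "gconnected W E \<longleftrightarrow> W \<noteq> {} \<and>
     (\<forall>u\<in>W. \<forall>v\<in>W. (\<lambda>x y. E x y \<and> x \<in> W \<and> y \<in> W)\<^sup>*\<^sup>* u v)"

definition three_dominating :: "'a set \<Rightarrow> ('a \<Rightarrow> 'a \<Rightarrow> bool) \<Rightarrow> 'a set \<Rightarrow> bool" where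
  "three_dominating V E S \<longleftrightarrow> S \<subseteq> V \<and> (\<forall>v \<in> V - S. card {u \<in> S. E v u} \<ge> 3)"

definition gamma3 :: "'a set \<Rightarrow> ('a \<Rightarrow> 'a \<Rightarrow> bool) \<Rightarrow> nat" where
  "gamma3 V E = Min (card ` {S. three_dominating V E S})"

definition kappa :: "'a set \<Rightarrow> ('a \<Rightarrow> 'a \<Rightarrow> bool) \<Rightarrow> nat" where
  "kappa V E = Min (card ` {S. S \<subseteq> V \<and> (\<not> gconnected (V - S) E \<or> card (V - S) = 1)})"

definition graph_iso :: "'a set \<Rightarrow> ('a \<Rightarrow> 'a \<Rightarrow> bool) \<Rightarrow> 'b set \<Rightarrow> ('b \<Rightarrow> 'b \<Rightarrow> bool) \<Rightarrow> bool" where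
  "graph_iso V E W F \<longleftrightarrow> (\<exists>f. bij_betw f V W \<and> (\<forall>u\<in>V. \<forall>v\<in>V. E u v \<longleftrightarrow> F (f u) (f v)))"

definition K4_V :: "nat set" where "K4_V = {0..<4}"
definition K4_E :: "nat \<Rightarrow> nat \<Rightarrow> bool" where
  "K4_E u v \<longleftrightarrow> u \<in> K4_V \<and> v \<in> K4_V \<and> u \<noteq> v"

definition C4_V :: "nat set" where "C4_V = {0..<4}"
definition C4_E :: "nat \<Rightarrow> nat \<Rightarrow> bool" where
  "C4_E u v \<longleftrightarrow> u \<in> C4_V \<and> v \<in> C4_V \<and> ((u + 1) mod 4 = v \<or> (v + 1) mod 4 = u)"

definition K12_V :: "nat set" where "K12_V = {0, 1, 2}"
definition K12_E :: "nat \<Rightarrow> nat \<Rightarrow> bool" where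
  "K12_E u v \<longleftrightarrow> u \<in> K12_V \<and> v \<in> K12_V \<and> ((u = 0 \<and> v \<noteq> 0) \<or> (v = 0 \<and> u \<noteq> 0))"

end

theory Submission imports Defs begin

definition deg :: "('a \<Rightarrow> 'a \<Rightarrow> bool) \<Rightarrow> 'a \<Rightarrow> nat" where
  "deg E v = card {w. E v w}"

lemma nb_sub: "sgraph V E \<Longrightarrow> {w. E v w} \<subseteq> V"
  by (auto simp: sgraph_def)

lemma nb_fin: "sgraph V E \<Longrightarrow> finite {w. E v w}"
  using nb_sub by (metis finite_subset sgraph_def)

lemma td_fin: "sgraph V E \<Longrightarrow> finite {S. three_dominating V E S}"
  by (rule finite_subset[of _ "Pow V"]) (auto simp: three_dominating_def sgraph_def)

lemma td_V: "three_dominating V E V"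
  by (auto simp: three_dominating_def)

lemma gamma3_le: "sgraph V E \<Longrightarrow> three_dominating V E S \<Longrightarrow> gamma3 V E \<le> card S"
  unfolding gamma3_def using td_fin by (intro Min_le) auto

lemma gamma3_ex: "sgraph V E \<Longrightarrow> \<exists>S. three_dominating V E S \<and> gamma3 V E = card S"
proof -
  assume s: "sgraph V E"
  have "gamma3 V E \<in> card ` {S. three_dominating V E S}"
    unfolding gamma3_def using td_fin[OF s] td_V by (intro Min_in) auto
  then show ?thesis by auto
qed

lemma gamma3_le_n: "sgraph V E \<Longrightarrow> gamma3 V E \<le> card V"
  using gamma3_le td_V by blast

lemma gamma3_n:
  assumes s: "sgraph V E" and d: "\<forall>v\<in>V. deg E v \<le> 2"
  shows "gamma3 V E = card V"
proof -
  obtain S where S: "three_dominating V E S" "gamma3 V E = card S" using gamma3_ex[OF s] by blast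
  have "S = V"
  proof (rule ccontr)
    assume "S \<noteq> V"
    then obtain v where v: "v \<in> V" "v \<notin> S" using S(1) by (auto simp: three_dominating_def)
    have "card {u \<in> S. E v u} \<le> card {w. E v w}"
      by (rule card_mono[OF nb_fin[OF s]]) auto
    moreover have "card {u \<in> S. E v u} \<ge> 3" using S(1) v by (auto simp: three_dominating_def)
    ultimately show False using d v by (auto simp: deg_def)
  qed
  then show ?thesis using S by simp
qed

lemma gamma3_deg3:
  assumes s: "sgraph V E" and v: "v \<in> V" and d: "deg E v \<ge> 3"
  shows "gamma3 V E \<le> card V - 1"
proof -
  have eq: "{u \<in> V - {v}. E v u} = {w. E v w}" using s by (auto simp: sgraph_def)
  have "three_dominating V E (V - {v})"
    unfolding three_dominating_def
  proof (intro conjI ballI)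
    fix w assume "w \<in> V - (V - {v})"
    then have "w = v" by blast
    then show "3 \<le> card {u \<in> V - {v}. E w u}" using eq d by (simp add: deg_def)
  qed blast
  then have "gamma3 V E \<le> card (V - {v})" using gamma3_le s by blast
  then show ?thesis using v s by (simp add: sgraph_def)
qed

lemma gamma3_complete:
  assumes s: "sgraph V E" and c: "\<forall>u\<in>V. \<forall>v\<in>V. u \<noteq> v \<longrightarrow> E u v" and n: "card V \<ge> 3"
  shows "gamma3 V E = 3"
proof -
  have fV: "finite V" using s by (simp add: sgraph_def)
  obtain T where T: "T \<subseteq> V" "card T = 3" using obtain_subset_with_card_n[OF n] by blast
  have "three_dominating V E T"
    unfolding three_dominating_def
  proof (intro conjI ballI)
    fix w assume w: "w \<in> V - T"
    have "E w x" if "x \<in> T" for x using w T(1) c that by (metis DiffD1 DiffD2 subsetD)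
    then have "{u \<in> T. E w u} = T" by auto
    then show "3 \<le> card {u \<in> T. E w u}" using T by simp
  qed (use T in auto)
  then have le: "gamma3 V E \<le> 3" using gamma3_le[OF s] T by fastforce
  obtain S where S: "three_dominating V E S" "gamma3 V E = card S" using gamma3_ex[OF s] by blast
  have "card S \<ge> 3"
  proof (cases "S = V")
    case True then show ?thesis using n by simp
  next
    case False
    then obtain w where w: "w \<in> V" "w \<notin> S" using S(1) by (auto simp: three_dominating_def)
    have fS: "finite S" using S(1) fV by (meson finite_subset three_dominating_def)
    have "3 \<le> card {u \<in> S. E w u}" using S(1) w by (auto simp: three_dominating_def)
    also have "\<dots> \<le> card S" by (rule card_mono[OF fS]) auto
    finally show ?thesis .
  qed
  then show ?thesis using le S by simp
qed

definition kset :: "'a set \<Rightarrow> ('a \<Rightarrow> 'a \<Rightarrow> bool) \<Rightarrow> 'a set set" where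
  "kset V E = {S. S \<subseteq> V \<and> (\<not> gconnected (V - S) E \<or> card (V - S) = 1)}"

lemma ks_fin: "sgraph V E \<Longrightarrow> finite (kset V E)"
  by (rule finite_subset[of _ "Pow V"]) (auto simp: kset_def sgraph_def)

lemma V_ks: "V \<in> kset V E"
  by (auto simp: kset_def gconnected_def)

lemma kappa_le: "sgraph V E \<Longrightarrow> S \<subseteq> V \<Longrightarrow> \<not> gconnected (V - S) E \<or> card (V - S) = 1 \<Longrightarrow> kappa V E \<le> card S"
  unfolding kappa_def using ks_fin[of V E] by (intro Min_le) (auto simp: kset_def)

lemma kappa_ex: "sgraph V E \<Longrightarrow> \<exists>S. S \<subseteq> V \<and> (\<not> gconnected (V - S) E \<or> card (V - S) = 1) \<and> kappa V E = card S"
proof -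
  assume s: "sgraph V E"
  have "kappa V E \<in> card ` kset V E"
    unfolding kappa_def kset_def[symmetric] using ks_fin[OF s] V_ks by (intro Min_in) auto
  then show ?thesis by (auto simp: kset_def)
qed

lemma kappa_le_n1:
  assumes s: "sgraph V E" and v: "v \<in> V"
  shows "kappa V E \<le> card V - 1"
proof -
  have "V - (V - {v}) = {v}" using v by auto
  then have "kappa V E \<le> card (V - {v})" using kappa_le[OF s, of "V - {v}"] by auto
  then show ?thesis using v s by (simp add: sgraph_def)
qed

lemma kappa_le_deg:
  assumes s: "sgraph V E" and uv: "u \<in> V" "v \<in> V" "u \<noteq> v" "\<not> E u v"
  shows "kappa V E \<le> deg E u"
proof -
  let ?S = "{w. E u w}"
  let ?W = "V - ?S"
  have "\<not> gconnected ?W E"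
  proof
    assume g: "gconnected ?W E"
    have "u \<in> ?W" "v \<in> ?W" using uv s by (auto simp: sgraph_def)
    then have "(\<lambda>x y. E x y \<and> x \<in> ?W \<and> y \<in> ?W)\<^sup>*\<^sup>* u v" using g by (auto simp: gconnected_def)
    then show False
      by (rule converse_rtranclpE) (use uv in auto)
  qed
  then show ?thesis using kappa_le[OF s nb_sub[OF s]] by (auto simp: deg_def)
qed

lemma conn_diam2:
  assumes "W \<noteq> {}" and d: "\<forall>u\<in>W. \<forall>v\<in>W. u = v \<or> E u v \<or> (\<exists>w\<in>W. E u w \<and> E w v)"
  shows "gconnected W E"
  unfolding gconnected_def
proof (intro conjI ballI)
  fix u v assume uv: "u \<in> W" "v \<in> W"
  let ?R = "\<lambda>x y. E x y \<and> x \<in> W \<and> y \<in> W"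
  from d uv consider "u = v" | "E u v" | w where "w \<in> W" "E u w" "E w v" by blast
  then show "?R\<^sup>*\<^sup>* u v"
  proof cases
    case 3
    then have "?R u w" "?R w v" using uv by auto
    then have "?R\<^sup>*\<^sup>* u w" by (intro r_into_rtranclp)
    then show ?thesis using \<open>?R w v\<close> by (rule rtranclp.rtrancl_into_rtrancl)
  qed (use uv in auto)
qed (use assms in auto)

lemma kappa_complete:
  assumes s: "sgraph V E" and c: "\<forall>u\<in>V. \<forall>v\<in>V. u \<noteq> v \<longrightarrow> E u v" and v: "v \<in> V"
  shows "kappa V E = card V - 1"
proof -
  have fV: "finite V" using s by (simp add: sgraph_def)
  obtain S where S: "S \<subseteq> V" "\<not> gconnected (V - S) E \<or> card (V - S) = 1" "kappa V E = card S"
    using kappa_ex[OF s] by blast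
  have "\<not> card S < card V - 1"
  proof
    assume lt: "card S < card V - 1"
    have cd: "card (V - S) = card V - card S" using S(1) fV by (meson card_Diff_subset finite_subset)
    then have "card (V - S) \<ge> 2" using lt by linarith
    then have "V - S \<noteq> {}" by (metis card.empty not_numeral_le_zero)
    then have "gconnected (V - S) E" using c by (intro conn_diam2) auto
    then show False using S(2) \<open>card (V - S) \<ge> 2\<close> by auto
  qed
  then show ?thesis using kappa_le_n1[OF s v] S by linarith
qed

lemma conn_nbr:
  assumes "gconnected V E" "u \<in> V" "v \<in> V" "u \<noteq> v"
  shows "\<exists>w\<in>V. E u w"
proof -
  have "(\<lambda>x y. E x y \<and> x \<in> V \<and> y \<in> V)\<^sup>*\<^sup>* u v" using assms by (auto simp: gconnected_def)
  then show ?thesis by (rule converse_rtranclpE) (use assms in auto)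
qed


lemma iso_inv:
  assumes "graph_iso V E W F"
  obtains g where "bij_betw g W V" "\<forall>i\<in>W. \<forall>j\<in>W. E (g i) (g j) \<longleftrightarrow> F i j"
proof -
  obtain f where f: "bij_betw f V W" "\<forall>u\<in>V. \<forall>v\<in>V. E u v \<longleftrightarrow> F (f u) (f v)"
    using assms by (auto simp: graph_iso_def)
  let ?g = "inv_into V f"
  have b: "bij_betw ?g W V" using f(1) by (rule bij_betw_inv_into)
  have "\<forall>i\<in>W. \<forall>j\<in>W. E (?g i) (?g j) \<longleftrightarrow> F i j"
  proof (intro ballI)
    fix i j assume ij: "i \<in> W" "j \<in> W"
    have "?g i \<in> V" "?g j \<in> V" using b ij by (auto dest: bij_betw_apply)
    moreover have "f (?g i) = i" "f (?g j) = j" using ij f(1)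
      by (auto simp: bij_betw_def f_inv_into_f)
    ultimately show "E (?g i) (?g j) \<longleftrightarrow> F i j" using f(2) by metis
  qed
  then show ?thesis using b that by blast
qed

definition K4f where "K4f V E a b c d \<longleftrightarrow> distinct [a,b,c,d] \<and> V = {a,b,c,d} \<and>
   (\<forall>x y. E x y \<longleftrightarrow> x \<in> V \<and> y \<in> V \<and> x \<noteq> y)"
definition C4f where "C4f V E a b c d \<longleftrightarrow> distinct [a,b,c,d] \<and> V = {a,b,c,d} \<and>
   (\<forall>x y. E x y \<longleftrightarrow> (x,y) \<in> {(a,b),(b,a),(b,c),(c,b),(c,d),(d,c),(d,a),(a,d)})"
definition K12f where "K12f V E a b c \<longleftrightarrow> distinct [a,b,c] \<and> V = {a,b,c} \<and>
   (\<forall>x y. E x y \<longleftrightarrow> (x,y) \<in> {(a,b),(b,a),(a,c),(c,a)})"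

lemma four: "{0..<4::nat} = {0,1,2,3}" by auto

lemma edge_ext:
  assumes "\<And>x y. E x y \<Longrightarrow> x \<in> V \<and> y \<in> V" "\<And>x y. P x y \<Longrightarrow> x \<in> V \<and> y \<in> V"
    "\<forall>x\<in>V. \<forall>y\<in>V. E x y \<longleftrightarrow> P x y"
  shows "\<forall>x y. E x y \<longleftrightarrow> P x y"
  using assms by blast

lemma K4_iso_form: "sgraph V E \<Longrightarrow> graph_iso V E K4_V K4_E \<Longrightarrow> \<exists>a b c d. K4f V E a b c d"
proof -
  assume s: "sgraph V E" and i: "graph_iso V E K4_V K4_E"
  obtain g where g: "bij_betw g {0,1,2,3} V" "\<forall>i\<in>{0,1,2,3}. \<forall>j\<in>{0,1,2,3}. E (g i) (g j) \<longleftrightarrow> K4_E i j"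
    using iso_inv[OF i] by (auto simp: K4_V_def four)
  have V: "V = {g 0, g 1, g 2, g 3}" using g(1) by (auto simp: bij_betw_def)
  have inj: "inj_on g {0,1,2,3}" using g(1) by (simp add: bij_betw_def)
  have d: "distinct [g 0, g 1, g 2, g 3]" using inj by (auto simp: inj_on_def)
  have "\<forall>x y. E x y \<longleftrightarrow> x \<in> V \<and> y \<in> V \<and> x \<noteq> y"
    apply (rule edge_ext[where V=V])
    using s apply (simp add: sgraph_def)
     apply simp
    using g(2) d unfolding V by (simp add: K4_E_def K4_V_def) (elim conjE; simp)
  then show ?thesis using d V unfolding K4f_def by blast
qed

lemma C4_iso_form: "sgraph V E \<Longrightarrow> graph_iso V E C4_V C4_E \<Longrightarrow> \<exists>a b c d. C4f V E a b c d"
proof -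
  assume s: "sgraph V E" and i: "graph_iso V E C4_V C4_E"
  obtain g where g: "bij_betw g {0,1,2,3} V" "\<forall>i\<in>{0,1,2,3}. \<forall>j\<in>{0,1,2,3}. E (g i) (g j) \<longleftrightarrow> C4_E i j"
    using iso_inv[OF i] by (auto simp: C4_V_def four)
  have V: "V = {g 0, g 1, g 2, g 3}" using g(1) by (auto simp: bij_betw_def)
  have inj: "inj_on g {0,1,2,3}" using g(1) by (simp add: bij_betw_def)
  have d: "distinct [g 0, g 1, g 2, g 3]" using inj by (auto simp: inj_on_def)
  let ?a = "g 0" let ?b = "g 1" let ?c = "g 2" let ?d = "g 3"
  have "\<forall>x y. E x y \<longleftrightarrow> (x,y) \<in> {(?a,?b),(?b,?a),(?b,?c),(?c,?b),(?c,?d),(?d,?c),(?d,?a),(?a,?d)}"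
    apply (rule edge_ext[where V=V])
    using s apply (simp add: sgraph_def)
     apply (auto simp: V)[1]
    using g(2) d unfolding V by (simp add: C4_E_def C4_V_def) (elim conjE; simp)
  then show ?thesis using d V unfolding C4f_def by blast
qed

lemma K12_iso_form: "sgraph V E \<Longrightarrow> graph_iso V E K12_V K12_E \<Longrightarrow> \<exists>a b c. K12f V E a b c"
proof -
  assume s: "sgraph V E" and i: "graph_iso V E K12_V K12_E"
  obtain g where g: "bij_betw g {0,1,2} V" "\<forall>i\<in>{0,1,2}. \<forall>j\<in>{0,1,2}. E (g i) (g j) \<longleftrightarrow> K12_E i j"
    using iso_inv[OF i] by (auto simp: K12_V_def)
  have V: "V = {g 0, g 1, g 2}" using g(1) by (auto simp: bij_betw_def)
  have inj: "inj_on g {0,1,2}" using g(1) by (simp add: bij_betw_def)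
  have d: "distinct [g 0, g 1, g 2]" using inj by (auto simp: inj_on_def)
  let ?a = "g 0" let ?b = "g 1" let ?c = "g 2"
  have "\<forall>x y. E x y \<longleftrightarrow> (x,y) \<in> {(?a,?b),(?b,?a),(?a,?c),(?c,?a)}"
    apply (rule edge_ext[where V=V])
    using s apply (simp add: sgraph_def)
     apply (auto simp: V)[1]
    using g(2) d unfolding V by (simp add: K12_E_def K12_V_def) (elim conjE; simp)
  then show ?thesis using d V unfolding K12f_def by blast
qed


lemma form_K4_iso: "K4f V E a b c d \<Longrightarrow> graph_iso V E K4_V K4_E"
proof -
  assume k: "K4f V E a b c d"
  define f where "f z = (if z = a then 0 else if z = b then 1 else if z = c then 2 else (3::nat))" for z
  have bij: "bij_betw f V K4_V" using k unfolding bij_betw_def K4f_def K4_V_def four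
    by (auto simp: f_def inj_on_def)
  have "\<forall>u\<in>V. \<forall>v\<in>V. E u v \<longleftrightarrow> K4_E (f u) (f v)" using k unfolding K4f_def
    by (auto simp: f_def K4_E_def K4_V_def)
  then show ?thesis using bij unfolding graph_iso_def by blast
qed

lemma form_C4_iso: "C4f V E a b c d \<Longrightarrow> graph_iso V E C4_V C4_E"
proof -
  assume k: "C4f V E a b c d"
  define f where "f z = (if z = a then 0 else if z = b then 1 else if z = c then 2 else (3::nat))" for z
  have bij: "bij_betw f V C4_V" using k unfolding bij_betw_def C4f_def C4_V_def four
    by (auto simp: f_def inj_on_def)
  have "\<forall>u\<in>V. \<forall>v\<in>V. E u v \<longleftrightarrow> C4_E (f u) (f v)" using k unfolding C4f_def
    by (auto simp: f_def C4_E_def C4_V_def)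
  then show ?thesis using bij unfolding graph_iso_def by blast
qed

lemma form_K12_iso: "K12f V E a b c \<Longrightarrow> graph_iso V E K12_V K12_E"
proof -
  assume k: "K12f V E a b c"
  define f where "f z = (if z = a then 0 else if z = b then 1 else (2::nat))" for z
  have bij: "bij_betw f V K12_V" using k unfolding bij_betw_def K12f_def K12_V_def
    by (auto simp: f_def inj_on_def)
  have "\<forall>u\<in>V. \<forall>v\<in>V. E u v \<longleftrightarrow> K12_E (f u) (f v)" using k unfolding K12f_def
    by (auto simp: f_def K12_E_def K12_V_def)
  then show ?thesis using bij unfolding graph_iso_def by blast
qed


lemma card_le2: "finite {w. E x w} \<Longrightarrow> {w. E x w} \<subseteq> {p, q} \<Longrightarrow> deg E x \<le> 2"
proof -
  assume "finite {w. E x w}" "{w. E x w} \<subseteq> {p, q}"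
  then have "deg E x \<le> card {p, q}" unfolding deg_def by (intro card_mono) auto
  also have "\<dots> \<le> 2" by (simp add: card_insert_if)
  finally show ?thesis .
qed

lemma K4_sum: "sgraph V E \<Longrightarrow> K4f V E a b c d \<Longrightarrow> gamma3 V E + kappa V E = 2 * card V - 2"
proof -
  assume s: "sgraph V E" and k: "K4f V E a b c d"
  have c: "\<forall>u\<in>V. \<forall>v\<in>V. u \<noteq> v \<longrightarrow> E u v" using k by (simp add: K4f_def)
  have n: "card V = 4" using k by (simp add: K4f_def)
  have "a \<in> V" using k by (simp add: K4f_def)
  then show ?thesis using gamma3_complete[OF s c] kappa_complete[OF s c] n by simp
qed

lemma C4_sum: "sgraph V E \<Longrightarrow> C4f V E a b c d \<Longrightarrow> gamma3 V E + kappa V E = 2 * card V - 2"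
proof -
  assume s: "sgraph V E" and k: "C4f V E a b c d"
  have dist: "distinct [a,b,c,d]" and V: "V = {a,b,c,d}"
    and Ei: "\<And>x y. E x y \<longleftrightarrow> (x,y) \<in> {(a,b),(b,a),(b,c),(c,b),(c,d),(d,c),(d,a),(a,d)}"
    using k by (auto simp: C4f_def)
  have n: "card V = 4" using dist V by simp
  have fin: "\<And>x. finite {w. E x w}" using nb_fin[OF s] .
  have "\<forall>v\<in>V. deg E v \<le> 2" unfolding V
    apply (simp only: ball_simps)
    apply (intro conjI)
       apply (rule card_le2[OF fin, where p=b and q=d]) apply (insert dist, auto simp: Ei)[1]
      apply (rule card_le2[OF fin, where p=a and q=c]) apply (insert dist, auto simp: Ei)[1]
     apply (rule card_le2[OF fin, where p=b and q=d]) apply (insert dist, auto simp: Ei)[1]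
    apply (rule card_le2[OF fin, where p=a and q=c]) apply (insert dist, auto simp: Ei)[1]
    apply simp
    done
  then have g: "gamma3 V E = 4" using gamma3_n[OF s] n by simp
  have "kappa V E \<le> deg E a" using kappa_le_deg[OF s, of a c] dist V Ei by auto
  moreover have "deg E a \<le> 2" using \<open>\<forall>v\<in>V. deg E v \<le> 2\<close> V by auto
  moreover have "kappa V E \<ge> 2"
  proof (rule ccontr)
    assume "\<not> kappa V E \<ge> 2"
    obtain S where S: "S \<subseteq> V" "\<not> gconnected (V - S) E \<or> card (V - S) = 1" "kappa V E = card S"
      using kappa_ex[OF s] by blast
    have fS: "finite S" using S(1) V finite_subset by blast
    have "card S = 0 \<or> card S = 1" using S(3) \<open>\<not> kappa V E \<ge> 2\<close> by linarith
    then have "S = {} \<or> (\<exists>x\<in>V. S = {x})" using fS S(1) by (auto simp: card_1_singleton_iff)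
    moreover have "gconnected (V - {}) E \<and> card (V - {}) \<noteq> 1"
      using dist V by (auto intro!: conn_diam2 simp: Ei)
    moreover have "gconnected (V - {x}) E \<and> card (V - {x}) \<noteq> 1" if "x \<in> V" for x
      using that dist unfolding V by (auto intro!: conn_diam2 simp: Ei)
    ultimately show False using S(2) by blast
  qed
  ultimately show ?thesis using g n by simp
qed

lemma K12_sum: "sgraph V E \<Longrightarrow> K12f V E a b c \<Longrightarrow> gamma3 V E + kappa V E = 2 * card V - 2"
proof -
  assume s: "sgraph V E" and k: "K12f V E a b c"
  have dist: "distinct [a,b,c]" and V: "V = {a,b,c}"
    and Ei: "\<And>x y. E x y \<longleftrightarrow> (x,y) \<in> {(a,b),(b,a),(a,c),(c,a)}"
    using k by (auto simp: K12f_def)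
  have n: "card V = 3" using dist V by simp
  have fin: "\<And>x. finite {w. E x w}" using nb_fin[OF s] .
  have "\<forall>v\<in>V. deg E v \<le> 2" unfolding V
    apply (simp only: ball_simps)
    apply (intro conjI)
      apply (rule card_le2[OF fin, where p=b and q=c]) apply (insert dist, auto simp: Ei)[1]
     apply (rule card_le2[OF fin, where p=a and q=a]) apply (insert dist, auto simp: Ei)[1]
    apply (rule card_le2[OF fin, where p=a and q=a]) apply (insert dist, auto simp: Ei)[1]
    apply simp
    done
  then have g: "gamma3 V E = 3" using gamma3_n[OF s] n by simp
  have "kappa V E \<le> deg E b" using kappa_le_deg[OF s, of b c] dist V Ei by auto
  moreover have "deg E b \<le> 1"
  proof -
    have "deg E b \<le> card {a}" unfolding deg_def using dist by (intro card_mono) (auto simp: Ei)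
    then show ?thesis by simp
  qed
  moreover have "kappa V E \<ge> 1"
  proof (rule ccontr)
    assume "\<not> kappa V E \<ge> 1"
    obtain S where S: "S \<subseteq> V" "\<not> gconnected (V - S) E \<or> card (V - S) = 1" "kappa V E = card S"
      using kappa_ex[OF s] by blast
    have fS: "finite S" using S(1) V finite_subset by blast
    have "card S = 0" using S(3) \<open>\<not> kappa V E \<ge> 1\<close> by simp
    then have "S = {}" using fS by simp
    moreover have "gconnected (V - {}) E \<and> card (V - {}) \<noteq> 1"
      using dist V by (auto intro!: conn_diam2 simp: Ei)
    ultimately show False using S(2) by blast
  qed
  ultimately show ?thesis using g n by simp
qed


lemma card4: "card (V::'a set) = 4 \<Longrightarrow> \<exists>a b c d. distinct [a,b,c,d] \<and> V = {a,b,c,d}"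
  by (simp add: numeral_eq_Suc card_Suc_eq) blast

lemma forward:
  assumes s: "sgraph V E" and cn: "gconnected V E"
    and h: "gamma3 V E + kappa V E = 2 * card V - 2"
  shows "(\<exists>a b c d. K4f V E a b c d) \<or> (\<exists>a b c d. C4f V E a b c d) \<or> (\<exists>a b c. K12f V E a b c)"
proof -
  have fV: "finite V" using s by (simp add: sgraph_def)
  have inV: "\<And>x y. E x y \<Longrightarrow> x \<in> V \<and> y \<in> V" using s by (simp add: sgraph_def)
  have sym: "\<And>x y. E x y \<Longrightarrow> E y x" using s by (simp add: sgraph_def)
  have irr: "\<And>x. \<not> E x x" using s by (simp add: sgraph_def)
  obtain v0 where v0: "v0 \<in> V" using cn by (auto simp: gconnected_def)
  have n1: "card V \<ge> 1" using v0 fV by (metis One_nat_def Suc_leI card_gt_0_iff empty_iff)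
  have fin: "\<And>x. finite {w. E x w}" using nb_fin[OF s] .
  have nbsub: "\<And>z. {w. E z w} \<subseteq> V - {z}" using inV irr by blast
  have degle: "deg E z \<le> card V - 1" if "z \<in> V" for z
  proof -
    have "deg E z \<le> card (V - {z})" unfolding deg_def by (rule card_mono) (use fV nbsub in auto)
    then show ?thesis using that fV by simp
  qed
  have g_le: "gamma3 V E \<le> card V" using gamma3_le_n[OF s] .
  show ?thesis
  proof (cases "\<forall>u\<in>V. \<forall>v\<in>V. u \<noteq> v \<longrightarrow> E u v")
    case True
    have k: "kappa V E = card V - 1" using kappa_complete[OF s True v0] .
    have n3: "card V \<ge> 3"
    proof (rule ccontr)
      assume "\<not> card V \<ge> 3"
      then have "\<forall>z\<in>V. deg E z \<le> 2" using degle by fastforce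
      then have "gamma3 V E = card V" using gamma3_n[OF s] by blast
      then show False using h k n1 by linarith
    qed
    have "gamma3 V E = 3" using gamma3_complete[OF s True n3] .
    then have n4: "card V = 4" using h k n3 by linarith
    obtain a b c d where abcd: "distinct [a,b,c,d]" "V = {a,b,c,d}" using card4[OF n4] by blast
    have "\<forall>x y. E x y \<longleftrightarrow> x \<in> V \<and> y \<in> V \<and> x \<noteq> y" using True inV irr by blast
    then have "K4f V E a b c d" using abcd by (simp add: K4f_def)
    then show ?thesis by blast
  next
    case False
    then obtain u v where uv: "u \<in> V" "v \<in> V" "u \<noteq> v" "\<not> E u v" by blast
    have nvu: "\<not> E v u" using uv sym by blast
    have cuv: "card (V - {u,v}) = card V - 2" using uv fV by (simp add: card_Diff_subset)
    have nbu: "{w. E u w} \<subseteq> V - {u,v}" using nbsub uv by blast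
    have degu: "deg E u \<le> card V - 2" unfolding deg_def using card_mono[OF _ nbu] fV cuv by simp
    have kle: "kappa V E \<le> deg E u" using kappa_le_deg[OF s uv] .
    have n2: "card V \<ge> 2" using uv fV
      by (metis card_2_iff card_mono empty_subsetI insert_subset)
    have g: "gamma3 V E = card V" and k: "kappa V E = card V - 2"
      using h g_le kle degu n2 by linarith+
    have deg2: "\<forall>z\<in>V. deg E z \<le> 2"
    proof
      fix z assume z: "z \<in> V"
      show "deg E z \<le> 2"
      proof (rule ccontr)
        assume "\<not> deg E z \<le> 2"
        then have "gamma3 V E \<le> card V - 1" using gamma3_deg3[OF s z] by simp
        then show False using g n1 by linarith
      qed
    qed
    obtain w where w: "w \<in> V" "E u w" using conn_nbr[OF cn uv(1,2,3)] by blast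
    have wu: "w \<noteq> u" "w \<noteq> v" using w irr uv by auto
    have sub3: "{u,v,w} \<subseteq> V" using uv w by auto
    have c3: "card {u,v,w} = 3" using uv wu by auto
    have n3: "card V \<ge> 3" using card_mono[OF fV sub3] c3 by simp
    have n4: "card V \<le> 4" using k kle deg2 uv(1) by fastforce
    show ?thesis
    proof (cases "card V = 3")
      case True
      have V: "V = {u,v,w}" using card_seteq[OF fV sub3] True c3 by simp
      obtain w' where w': "w' \<in> V" "E v w'" using conn_nbr[OF cn uv(2,1)] uv by metis
      have "w' = w" using w' V irr nvu by auto
      then have Evw: "E v w" using w' by simp
      have "\<forall>x y. E x y \<longleftrightarrow> (x,y) \<in> {(w,u),(u,w),(w,v),(v,w)}"
        apply (rule edge_ext[where V=V])
        using inV apply blast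
         apply (auto simp: V)[1]
        using Evw w(2) sym[OF Evw] sym[OF w(2)] uv(4) nvu irr uv(3) wu unfolding V by auto
      then have "K12f V E w u v" using V uv wu by (auto simp: K12f_def)
      then show ?thesis by blast
    next
      case False
      then have n4: "card V = 4" using n3 n4 by linarith
      then have k2: "kappa V E = 2" using k by simp
      have dge: "deg E z \<ge> 2" if z: "z \<in> V" for z
      proof (cases "\<exists>y\<in>V. y \<noteq> z \<and> \<not> E z y")
        case True
        then obtain y where "y \<in> V" "y \<noteq> z" "\<not> E z y" by blast
        then show ?thesis using kappa_le_deg[OF s z] k2 by fastforce
      next
        case False
        then have "{w. E z w} = V - {z}" using nbsub by blast
        then have "deg E z = 3" using n4 z fV by (simp add: deg_def)
        then show ?thesis by simp
      qed
      have c2: "card (V - {u,v}) = 2" using cuv n4 by simp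
      then obtain x y where xy: "V - {u,v} = {x,y}" "x \<noteq> y" by (auto simp: card_2_iff)
      have dg2: "\<And>z. z \<in> V \<Longrightarrow> card {w. E z w} = 2" using dge deg2 unfolding deg_def by (meson le_antisym)
      have "{w. E u w} = {x,y}"
        using card_seteq[of "{x,y}" "{w. E u w}"] nbu xy dg2[OF uv(1)] by simp
      then have Eux: "E u x" "E u y" by auto
      have nbv: "{w. E v w} \<subseteq> {x,y}" using nbsub[of v] nvu xy by blast
      have "{w. E v w} = {x,y}"
        using card_seteq[of "{x,y}" "{w. E v w}"] nbv xy dg2[OF uv(2)] by simp
      then have Evx: "E v x" "E v y" by auto
      have xV: "x \<in> V" "y \<in> V" "x \<notin> {u,v}" "y \<notin> {u,v}" using xy(1) by blast+
      have "{u,v} \<subseteq> {w. E x w}" using Eux Evx sym by auto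
      then have "{u,v} = {w. E x w}"
        using card_seteq[OF fin] dg2[OF xV(1)] uv(3) by simp
      then have nxy: "\<not> E x y" using xV by auto
      have V: "V = {u,x,v,y}" using xy(1) uv by blast
      have "\<forall>a b. E a b \<longleftrightarrow> (a,b) \<in> {(u,x),(x,u),(x,v),(v,x),(v,y),(y,v),(y,u),(u,y)}"
        apply (rule edge_ext[where V=V])
        using inV apply blast
         apply (auto simp: V)[1]
        using Eux Evx sym[OF Eux(1)] sym[OF Eux(2)] sym[OF Evx(1)] sym[OF Evx(2)]
          uv(4) nvu irr nxy sym[of y x] unfolding V by auto
      then have "C4f V E u x v y" using V uv xy xV by (auto simp: C4f_def)
      then show ?thesis by blast
    qed
  qed
qed

theorem theorem3p2:
  fixes V :: "'a set" and E :: "'a \<Rightarrow> 'a \<Rightarrow> bool"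
  assumes "sgraph V E" and "gconnected V E"
  shows "gamma3 V E + kappa V E = 2 * card V - 2 \<longleftrightarrow>
    (graph_iso V E K4_V K4_E \<or> graph_iso V E C4_V C4_E \<or> graph_iso V E K12_V K12_E)"
proof
  assume h: "gamma3 V E + kappa V E = 2 * card V - 2"
  from forward[OF assms h] show "graph_iso V E K4_V K4_E \<or> graph_iso V E C4_V C4_E \<or> graph_iso V E K12_V K12_E"
  proof (elim disjE exE)
    fix a b c d assume "K4f V E a b c d" then have "graph_iso V E K4_V K4_E" by (rule form_K4_iso) then show ?thesis by blast
  next
    fix a b c d assume "C4f V E a b c d" then have "graph_iso V E C4_V C4_E" by (rule form_C4_iso) then show ?thesis by blast
  next
    fix a b c assume "K12f V E a b c" then have "graph_iso V E K12_V K12_E" by (rule form_K12_iso) then show ?thesis by blast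
  qed
next
  assume "graph_iso V E K4_V K4_E \<or> graph_iso V E C4_V C4_E \<or> graph_iso V E K12_V K12_E"
  then show "gamma3 V E + kappa V E = 2 * card V - 2"
    using K4_iso_form[OF assms(1)] C4_iso_form[OF assms(1)] K12_iso_form[OF assms(1)]
      K4_sum[OF assms(1)] C4_sum[OF assms(1)] K12_sum[OF assms(1)] by metis
qed

end
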